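(* The maps $(\lambda,\mu)\mapsto z(\lambda,\mu)$, with inverse $\lambda=\frac{z_0-z_1}{z_2-1}=\frac{z_2+1}{z_0+z_1}$, $\mu=\frac{z_0-z_1}{z_2+1}=\frac{z_2-1}{z_0+z_1}$, define biholomorphic mappings from the tubes $\tau^{-,+}$ and $\tau^{+,-}$ onto $\mathcal T^+$ and $\mathcal T^-$ respectively, and from the pierced tubes $\tau^{+,+}\setminus\delta$ and $\tau^{-,-}\setminus\delta$ onto $\mathcal T_\leftarrow$ and $\mathcal T_\rightarrow$ respectively, where $\delta=\{(\lambda,\mu):\lambda=\mu\}$.
   Context: $[z\cdot z']=z_0z'_0-z_1z'_1-z_2z'_2$ on $\mathbb C^3$, $z^2=[z\cdot z]$; $X^{(c)}=\{z\in\mathbb C^3:z^2=-1\}$, $z=x+iy$; $V^+=\{y:y^2>0,y_0>0\}$, $V^-=-V^+$; $\mathcal T^\pm=\{z\in X^{(c)}:y\in V^\pm\}$; fix $e\in V^+$; $\mathcal T_\rightarrow=\{z\in X^{(c)}:y^2<0,{\rm sgn}\det(e,x,y)=-1\}$, $\mathcal T_\leftarrow$ the same with $+1$. For $(\lambda,\mu)\in\mathbb C^2$, $\lambda\ne\mu$: $z(\lambda,\mu)=\big(\frac{1+\lambda\mu}{\lambda-\mu},\frac{1-\lambda\mu}{\lambda-\mu},\frac{\lambda+\mu}{\lambda-\mu}\big)$. For signs $\varepsilon,\varepsilon'$: $\tau^{\varepsilon,\varepsilon'}=\{(\lambda,\mu)\in\mathbb C^2:\varepsilon{\rm Im}\lambda>0,\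 \varepsilon'{\rm Im}\mu>0\}$. *)

theory Defs
  imports "HOL-Analysis.Analysis"
begin

type_synonym c2 = "complex \<times> complex"
type_synonym c3 = "complex \<times> complex \<times> complex"
type_synonym r3 = "real \<times> real \<times> real"

fun mdot :: "c3 \<Rightarrow> c3 \<Rightarrow> complex" where
  "mdot (z0, z1, z2) (w0, w1, w2) = z0 * w0 - z1 * w1 - z2 * w2"

fun mdotR :: "r3 \<Rightarrow> r3 \<Rightarrow> real" where
  "mdotR (z0, z1, z2) (w0, w1, w2) = z0 * w0 - z1 * w1 - z2 * w2"

fun re3 :: "c3 \<Rightarrow> r3" where "re3 (a, b, c) = (Re a, Re b, Re c)"
fun im3 :: "c3 \<Rightarrow> r3" where "im3 (a, b, c) = (Im a, Im b, Im c)"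

fun det3 :: "r3 \<Rightarrow> r3 \<Rightarrow> r3 \<Rightarrow> real" where
  "det3 (u0, u1, u2) (v0, v1, v2) (w0, w1, w2) =
     u0 * (v1 * w2 - v2 * w1) - v0 * (u1 * w2 - u2 * w1) + w0 * (u1 * v2 - u2 * v1)"

definition Xc :: "c3 set" where "Xc = {z. mdot z z = -1}"

definition Vplus :: "r3 set" where "Vplus = {y. mdotR y y > 0 \<and> fst y > 0}"
definition Vminus :: "r3 set" where "Vminus = uminus ` Vplus"

definition Tplus :: "c3 set" where "Tplus = {z \<in> Xc. im3 z \<in> Vplus}"
definition Tminus :: "c3 set" where "Tminus = {z \<in> Xc. im3 z \<in> Vminus}"

definition Tright :: "r3 \<Rightarrow> c3 set" where
  "Tright e = {z \<in> Xc. mdotR (im3 z) (im3 z) < 0 \<and> sgn (det3 e (re3 z) (im3 z)) = -1}"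
definition Tleft :: "r3 \<Rightarrow> c3 set" where
  "Tleft e = {z \<in> Xc. mdotR (im3 z) (im3 z) < 0 \<and> sgn (det3 e (re3 z) (im3 z)) = 1}"

definition zmap :: "c2 \<Rightarrow> c3" where
  "zmap p = (case p of (l, m) \<Rightarrow>
     ((1 + l * m) / (l - m), (1 - l * m) / (l - m), (l + m) / (l - m)))"

text \<open>tau eps eps' with eps, eps' in {1, -1}.\<close>
definition tau :: "real \<Rightarrow> real \<Rightarrow> c2 set" where
  "tau s s' = {(l, m). s * Im l > 0 \<and> s' * Im m > 0}"

definition diag :: "c2 set" where "diag = {(l, m). l = m}"

definition holo2 :: "(c2 \<Rightarrow> complex) \<Rightarrow> c2 set \<Rightarrow> bool" where
  "holo2 f S \<longleftrightarrow> (\<forall>p\<in>S. \<exists>L. (f has_derivative L) (at p) \<and>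
      (\<forall>c a b. L (c * a, c * b) = c * L (a, b)))"

definition holo3 :: "(c3 \<Rightarrow> complex) \<Rightarrow> c3 set \<Rightarrow> bool" where
  "holo3 f S \<longleftrightarrow> (\<forall>p\<in>S. \<exists>L. (f has_derivative L) (at p) \<and>
      (\<forall>c a b d. L (c * a, c * b, c * d) = c * L (a, b, d)))"

definition holo_map23 :: "(c2 \<Rightarrow> c3) \<Rightarrow> c2 set \<Rightarrow> bool" where
  "holo_map23 f S \<longleftrightarrow> holo2 (\<lambda>p. fst (f p)) S \<and> holo2 (\<lambda>p. fst (snd (f p))) S
      \<and> holo2 (\<lambda>p. snd (snd (f p))) S"

text \<open>Holomorphic map on a subset M of C^3 (e.g. an open piece of the complex
  submanifold X): locally the restriction of a holomorphic map on an open set of C^3.\<close>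
definition holo_sub32 :: "(c3 \<Rightarrow> c2) \<Rightarrow> c3 set \<Rightarrow> bool" where
  "holo_sub32 g M \<longleftrightarrow> (\<forall>p\<in>M. \<exists>U F1 F2. open U \<and> p \<in> U \<and> holo3 F1 U \<and> holo3 F2 U \<and>
      (\<forall>q\<in>U \<inter> M. g q = (F1 q, F2 q)))"

definition biholo :: "(c2 \<Rightarrow> c3) \<Rightarrow> c2 set \<Rightarrow> c3 set \<Rightarrow> bool" where
  "biholo f A B \<longleftrightarrow> open A \<and> holo_map23 f A \<and> bij_betw f A B \<and>
      holo_sub32 (the_inv_into A f) B"

definition inv_formulas :: "c2 set \<Rightarrow> bool" where
  "inv_formulas A \<longleftrightarrow> (\<forall>l m. (l, m) \<in> A \<longrightarrow>
     (case zmap (l, m) of (z0, z1, z2) \<Rightarrow>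
        l = (z0 - z1) / (z2 - 1) \<and> l = (z2 + 1) / (z0 + z1) \<and>
        m = (z0 - z1) / (z2 + 1) \<and> m = (z2 - 1) / (z0 + z1)))"

end

theory Submission
  imports Defs
begin


definition H2 :: "(c2 \<Rightarrow> complex) \<Rightarrow> c2 \<Rightarrow> bool" where
  "H2 f p \<longleftrightarrow> (\<exists>L. (f has_derivative L) (at p) \<and> (\<forall>c a b. L (c * a, c * b) = c * L (a, b)))"

lemma H2_const: "H2 (\<lambda>_. k) p"
  unfolding H2_def by (rule exI[of _ "\<lambda>_. 0"]) auto
lemma H2_fst: "H2 fst p"
  unfolding H2_def by (rule exI[of _ fst]) (auto intro: has_derivative_fst[OF has_derivative_ident])
lemma H2_snd: "H2 snd p"
  unfolding H2_def by (rule exI[of _ snd]) (auto intro: has_derivative_snd[OF has_derivative_ident])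
lemma H2_add: "H2 f p \<Longrightarrow> H2 g p \<Longrightarrow> H2 (\<lambda>x. f x + g x) p"
  unfolding H2_def apply (elim exE conjE)
  subgoal for L1 L2 by (rule exI[of _ "\<lambda>h. L1 h + L2 h"]) (auto intro: conjI[OF has_derivative_add] simp: algebra_simps)
  done
lemma H2_diff: "H2 f p \<Longrightarrow> H2 g p \<Longrightarrow> H2 (\<lambda>x. f x - g x) p"
  unfolding H2_def apply (elim exE conjE)
  subgoal for L1 L2 by (rule exI[of _ "\<lambda>h. L1 h - L2 h"]) (auto intro: conjI[OF has_derivative_diff] simp: algebra_simps)
  done
lemma H2_mult: "H2 f p \<Longrightarrow> H2 g p \<Longrightarrow> H2 (\<lambda>x. f x * g x) p"
  unfolding H2_def apply (elim exE conjE)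
  subgoal for L1 L2 by (rule exI[of _ "\<lambda>h. f p * L2 h + L1 h * g p"]) (intro conjI has_derivative_mult, assumption+, auto simp: algebra_simps)
  done
lemma H2_divide: "H2 f p \<Longrightarrow> H2 g p \<Longrightarrow> g p \<noteq> 0 \<Longrightarrow> H2 (\<lambda>x. f x / g x) p"
  unfolding H2_def apply (elim exE conjE)
  subgoal for L1 L2 by (rule exI[of _ "\<lambda>h. (L1 h * g p - f p * L2 h) / (g p * g p)"]) (intro conjI has_derivative_divide', assumption+, auto simp: algebra_simps)
  done

definition H3 :: "(c3 \<Rightarrow> complex) \<Rightarrow> c3 \<Rightarrow> bool" where
  "H3 f p \<longleftrightarrow> (\<exists>L. (f has_derivative L) (at p) \<and> (\<forall>c a b d. L (c * a, c * b, c * d) = c * L (a, b, d)))"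

lemma H3_const: "H3 (\<lambda>_. k) p"
  unfolding H3_def by (rule exI[of _ "\<lambda>_. 0"]) auto
lemma H3_0: "H3 fst p"
  unfolding H3_def by (rule exI[of _ fst]) (auto intro: has_derivative_fst[OF has_derivative_ident])
lemma H3_1: "H3 (\<lambda>q. fst (snd q)) p"
  unfolding H3_def by (rule exI[of _ "\<lambda>q. fst (snd q)"]) (auto intro: has_derivative_fst has_derivative_snd[OF has_derivative_ident])
lemma H3_2: "H3 (\<lambda>q. snd (snd q)) p"
  unfolding H3_def by (rule exI[of _ "\<lambda>q. snd (snd q)"]) (auto intro: has_derivative_snd[OF has_derivative_snd[OF has_derivative_ident]])
lemma H3_add: "H3 f p \<Longrightarrow> H3 g p \<Longrightarrow> H3 (\<lambda>x. f x + g x) p"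
  unfolding H3_def apply (elim exE conjE)
  subgoal for L1 L2 by (rule exI[of _ "\<lambda>h. L1 h + L2 h"]) (auto intro: conjI[OF has_derivative_add] simp: algebra_simps)
  done
lemma H3_diff: "H3 f p \<Longrightarrow> H3 g p \<Longrightarrow> H3 (\<lambda>x. f x - g x) p"
  unfolding H3_def apply (elim exE conjE)
  subgoal for L1 L2 by (rule exI[of _ "\<lambda>h. L1 h - L2 h"]) (auto intro: conjI[OF has_derivative_diff] simp: algebra_simps)
  done
lemma H3_divide: "H3 f p \<Longrightarrow> H3 g p \<Longrightarrow> g p \<noteq> 0 \<Longrightarrow> H3 (\<lambda>x. f x / g x) p"
  unfolding H3_def apply (elim exE conjE)
  subgoal for L1 L2 by (rule exI[of _ "\<lambda>h. (L1 h * g p - f p * L2 h) / (g p * g p)"]) (intro conjI has_derivative_divide', assumption+, auto simp: algebra_simps)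
  done



lemma zmap_comp:
  assumes "l \<noteq> m" "zmap (l,m) = (z0,z1,z2)"
  shows "z0 + z1 = 2/(l-m)" "z2+1 = 2*l/(l-m)" "z2 - 1 = 2*m/(l-m)" "z0 - z1 = 2*l*m/(l-m)"
    "z0 = (1 + l*m)/(l-m)" "z1 = (1 - l*m)/(l-m)" "z2 = (l+m)/(l-m)"
proof -
  have d: "l - m \<noteq> 0" using assms by simp
  have z: "z0 = (1 + l*m)/(l-m)" "z1 = (1 - l*m)/(l-m)" "z2 = (l+m)/(l-m)" using assms(2) unfolding zmap_def by auto
  show "z0 = (1 + l*m)/(l-m)" "z1 = (1 - l*m)/(l-m)" "z2 = (l+m)/(l-m)" by (fact z)+
  show "z0 + z1 = 2/(l-m)" "z2+1 = 2*l/(l-m)" "z2 - 1 = 2*m/(l-m)" "z0 - z1 = 2*l*m/(l-m)"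
    unfolding z using d by (simp_all add: diff_divide_distrib[symmetric] add_divide_distrib[symmetric] field_simps)
qed

lemma zmap_X: assumes "l \<noteq> m" shows "mdot (zmap (l,m)) (zmap (l,m)) = -1"
proof -
  obtain z0 z1 z2 where e: "zmap (l,m) = (z0,z1,z2)" by (metis prod.exhaust)
  have d: "l - m \<noteq> 0" using assms by simp
  note z = zmap_comp[OF assms e]
  have "mdot (zmap (l,m)) (zmap (l,m)) = ((1+l*m)*(1+l*m) - (1-l*m)*(1-l*m) - (l+m)*(l+m)) / ((l-m)*(l-m))"
    unfolding e mdot.simps z(5-7) times_divide_times_eq by (simp only: diff_divide_distrib)
  also have "... = -1"
  proof -
    have "(1+l*m)*(1+l*m) - (1-l*m)*(1-l*m) - (l+m)*(l+m) = -((l-m)*(l-m))" by algebra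
    then show ?thesis using d by simp
  qed
  finally show ?thesis .
qed

lemma zmap_inv:
  assumes "l \<noteq> m" "zmap (l,m) = (z0,z1,z2)"
  shows "(z2+1)/(z0+z1) = l" "(z2-1)/(z0+z1) = m"
    "l \<noteq> 0 \<Longrightarrow> (z0-z1)/(z2+1) = m" "m \<noteq> 0 \<Longrightarrow> (z0-z1)/(z2-1) = l"
proof -
  have d: "l - m \<noteq> 0" using assms by simp
  note z = zmap_comp[OF assms]
  show "(z2+1)/(z0+z1) = l" "(z2-1)/(z0+z1) = m"
    "l \<noteq> 0 \<Longrightarrow> (z0-z1)/(z2+1) = m" "m \<noteq> 0 \<Longrightarrow> (z0-z1)/(z2-1) = l"
    unfolding z(1-4) using d by (simp_all add: field_simps)
qed

lemma aux2: fixes N :: real shows "N \<noteq> 0 \<Longrightarrow> p0^2 - p1^2 - p2^2 = k*N \<Longrightarrow> (p0/N)^2 - (p1/N)^2 - (p2/N)^2 = k/N"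
proof -
  assume N: "N \<noteq> 0" and h: "p0^2 - p1^2 - p2^2 = k*N"
  have "(p0/N)^2 - (p1/N)^2 - (p2/N)^2 = (p0^2 - p1^2 - p2^2)/N^2" by (simp add: power_divide diff_divide_distrib)
  also have "... = k/N" using N unfolding h by (simp add: power2_eq_square)
  finally show ?thesis .
qed

lemma aux3: fixes N :: real shows "N \<noteq> 0 \<Longrightarrow> r1*q2 - r2*q1 = k*N \<Longrightarrow> (r1/N)*(q2/N) - (r2/N)*(q1/N) = k/N"
proof -
  assume N: "N \<noteq> 0" and h: "r1*q2 - r2*q1 = k*N"
  have "(r1/N)*(q2/N) - (r2/N)*(q1/N) = (r1*q2 - r2*q1)/(N*N)" by (simp add: diff_divide_distrib)
  also have "... = k/N" using N unfolding h by simp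
  finally show ?thesis .
qed

lemma zmap_im:
  assumes "l \<noteq> m" "zmap (l,m) = (z0,z1,z2)"
  defines "N \<equiv> (Re l - Re m)^2 + (Im l - Im m)^2"
  shows "N > 0" "Im z0 + Im z1 = 2*(Im m - Im l)/N"
    "(Im z0)^2 - (Im z1)^2 - (Im z2)^2 = -4*Im l*Im m/N"
    "Re z1 * Im z2 - Re z2 * Im z1 = (Im l + Im m + (cmod l)^2 * Im m + (cmod m)^2 * Im l)/N"
proof -
  obtain a b where l: "l = Complex a b" by (cases l)
  obtain c d where m: "m = Complex c d" by (cases m)
  have N: "N = (a-c)^2 + (b-d)^2" unfolding N_def l m by simp
  have "a \<noteq> c \<or> b \<noteq> d" using assms(1) l m by auto
  then have Np: "N > 0" unfolding N by (auto simp: sum_power2_gt_zero_iff)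
  show "N > 0" by fact
  have z: "z0 = (1 + l*m)/(l-m)" "z1 = (1 - l*m)/(l-m)" "z2 = (l+m)/(l-m)" using assms(2) unfolding zmap_def by auto
  have N2: "(a-c)^2 + (b-d)^2 \<noteq> 0" using Np N by linarith
  have y0: "Im z0 = ((a*d+b*c)*(a-c) - (1+a*c-b*d)*(b-d))/N"
    unfolding z l m N by (simp add: Im_divide)
  have y1: "Im z1 = (-(a*d+b*c)*(a-c) - (1-a*c+b*d)*(b-d))/N"
    unfolding z l m N by (simp add: Im_divide)
  have y2: "Im z2 = ((b+d)*(a-c) - (a+c)*(b-d))/N"
    unfolding z l m N by (simp add: Im_divide)
  have x1: "Re z1 = ((1-a*c+b*d)*(a-c) - (a*d+b*c)*(b-d))/N"
    unfolding z l m N by (simp add: Re_divide) (simp add: algebra_simps)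
  have x2: "Re z2 = ((a+c)*(a-c) + (b+d)*(b-d))/N"
    unfolding z l m N by (simp add: Re_divide)
  have Nz: "N \<noteq> 0" using Np by simp
  show "Im z0 + Im z1 = 2*(Im m - Im l)/N"
    unfolding y0 y1 l m using Nz by (simp add: field_simps)
  have P2: "((a*d+b*c)*(a-c) - (1+a*c-b*d)*(b-d))^2 - (-(a*d+b*c)*(a-c) - (1-a*c+b*d)*(b-d))^2
     - ((b+d)*(a-c) - (a+c)*(b-d))^2 = -4*b*d*N" unfolding N by algebra
  show "(Im z0)^2 - (Im z1)^2 - (Im z2)^2 = -4*Im l*Im m/N"
    unfolding y0 y1 y2 l m using aux2[OF Nz P2] by simp
  have P3: "((1-a*c+b*d)*(a-c) - (a*d+b*c)*(b-d)) * ((b+d)*(a-c) - (a+c)*(b-d))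
     - ((a+c)*(a-c) + (b+d)*(b-d)) * (-(a*d+b*c)*(a-c) - (1-a*c+b*d)*(b-d))
     = (b + d + (a^2+b^2)*d + (c^2+d^2)*b) * N" unfolding N by algebra
  show "Re z1 * Im z2 - Re z2 * Im z1 = (Im l + Im m + (cmod l)^2 * Im m + (cmod m)^2 * Im l)/N"
    unfolding y1 y2 x1 x2 l m using aux3[OF Nz P3] by (simp add: cmod_def)
qed



lemma Xc_split: assumes "z \<in> Xc" "z = (z0,z1,z2)"
  shows "mdotR (re3 z) (im3 z) = 0" "mdotR (re3 z) (re3 z) = mdotR (im3 z) (im3 z) - 1"
    "z0*z0 - z1*z1 - z2*z2 = -1"
proof -
  have h: "z0*z0 - z1*z1 - z2*z2 = -1" using assms by (simp add: Xc_def)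
  show "z0*z0 - z1*z1 - z2*z2 = -1" by fact
  have r: "Re (z0*z0 - z1*z1 - z2*z2) = -1" and i: "Im (z0*z0 - z1*z1 - z2*z2) = 0" using h by simp_all
  show "mdotR (re3 z) (im3 z) = 0" using i unfolding assms(2) by (simp add: algebra_simps)
  show "mdotR (re3 z) (re3 z) = mdotR (im3 z) (im3 z) - 1" using r unfolding assms(2) by (simp add: algebra_simps)
qed

lemma sum_nz: assumes "z \<in> Xc" "z = (z0,z1,z2)" "mdotR (im3 z) (im3 z) \<noteq> 0"
  shows "z0 + z1 \<noteq> 0"
proof
  assume s: "z0 + z1 = 0"
  then have z0: "z0 = -z1" by (simp add: add_eq_0_iff)
  have "z2 * z2 = 1" using Xc_split(3)[OF assms(1,2)] unfolding z0 by simp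
  then have "z2 = 1 \<or> z2 = -1" by (metis power2_eq_1_iff power2_eq_square)
  then have "Im z2 = 0" by auto
  moreover have "Im z0 = - Im z1" using z0 by simp
  ultimately show False using assms(3) unfolding assms(2) by simp
qed

lemma surj_pt: assumes "z \<in> Xc" "z = (z0,z1,z2)" "z0 + z1 \<noteq> 0"
  shows "(z2+1)/(z0+z1) \<noteq> (z2-1)/(z0+z1)" "zmap ((z2+1)/(z0+z1), (z2-1)/(z0+z1)) = z"
proof -
  have h: "z0*z0 - z1*z1 - z2*z2 = -1" by (rule Xc_split(3)[OF assms(1,2)])
  have d: "(z2+1)/(z0+z1) - (z2-1)/(z0+z1) = 2/(z0+z1)" by (simp add: diff_divide_distrib[symmetric])
  show "(z2+1)/(z0+z1) \<noteq> (z2-1)/(z0+z1)" using d assms(3) by auto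
  have p: "(z2+1)/(z0+z1) * ((z2-1)/(z0+z1)) = (z0-z1)/(z0+z1)"
  proof -
    have "(z2+1)*(z2-1) = (z0-z1)*(z0+z1)" using h by algebra
    then have "(z2+1)/(z0+z1) * ((z2-1)/(z0+z1)) = ((z0-z1)*(z0+z1))/((z0+z1)*(z0+z1))"
      by (simp add: times_divide_times_eq)
    then show ?thesis using assms(3) by simp
  qed
  have s: "(z2+1)/(z0+z1) + (z2-1)/(z0+z1) = 2*z2/(z0+z1)" by (simp add: add_divide_distrib[symmetric])
  show "zmap ((z2+1)/(z0+z1), (z2-1)/(z0+z1)) = z"
  proof -
    define l where "l = (z2+1)/(z0+z1)"
    define m where "m = (z2-1)/(z0+z1)"
    have d': "l - m = 2/(z0+z1)" "l*m = (z0-z1)/(z0+z1)" "l + m = 2*z2/(z0+z1)"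
      using d p s unfolding l_def m_def by auto
    have nz2: "z0*2 + z1*2 \<noteq> 0" using assms(3) by (metis distrib_right mult_eq_0_iff zero_neq_numeral)
    have "zmap (l,m) = ((1 + l*m)/(l-m), (1 - l*m)/(l-m), (l+m)/(l-m))" by (simp add: zmap_def)
    also have "... = (z0,z1,z2)" unfolding d' using assms(3) nz2 by (simp add: field_simps)
    finally show ?thesis unfolding l_def m_def assms(2) .
  qed
qed

definition mv :: "r3 \<Rightarrow> r3 \<Rightarrow> r3" where
  "mv x y = (fst (snd x) * snd (snd y) - snd (snd x) * fst (snd y),
             fst x * snd (snd y) - fst y * snd (snd x),
             fst y * fst (snd x) - fst x * fst (snd y))"

lemma det_mv: "det3 e x y = mdotR e (mv x y)"
  by (cases e; cases x; cases y) (simp add: mv_def algebra_simps)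

lemma mv_norm: "mdotR (mv x y) (mv x y) = mdotR x x * mdotR y y - (mdotR x y)^2"
  by (cases x; cases y) (simp add: mv_def power2_eq_square algebra_simps)

lemma sgn_timelike: assumes "e \<in> Vplus" "mdotR v v > 0" shows "sgn (mdotR e v) = sgn (fst v)"
proof -
  obtain e0 e1 e2 where e: "e = (e0,e1,e2)" by (metis prod.exhaust)
  obtain w0 w1 w2 where v: "v = (w0,w1,w2)" by (metis prod.exhaust)
  have E: "e0 > 0" "e1^2 + e2^2 < e0^2" using assms(1) unfolding Vplus_def e by (auto simp: power2_eq_square)
  have V: "w1^2 + w2^2 < w0^2" using assms(2) unfolding v by (auto simp: power2_eq_square)
  have cs: "(e1 * w1+e2 * w2)^2 \<le> (e1^2+e2^2)*(w1^2+w2^2)"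
  proof -
    have "(e1^2+e2^2)*(w1^2+w2^2) - (e1 * w1+e2 * w2)^2 = (e1 * w2 - e2 * w1)^2" by algebra
    then show ?thesis by (metis diff_ge_0_iff_ge zero_le_power2)
  qed
  have "(e1^2+e2^2)*(w1^2+w2^2) \<le> (e1^2+e2^2) * w0^2" using V by (intro mult_left_mono) auto
  also have "... < e0^2 * w0^2"
  proof -
    have "w0 \<noteq> 0" using V by (metis add_nonneg_nonneg not_less power_zero_numeral zero_le_power2 zero_power2)
    then show ?thesis using E by (intro mult_strict_right_mono) auto
  qed
  finally have lt: "(e1 * w1+e2 * w2)^2 < (e0 * w0)^2" using cs by (simp add: power_mult_distrib)
  then have lt2: "\<bar>e1 * w1+e2 * w2\<bar> < \<bar>e0 * w0\<bar>" by (metis abs_le_square_iff not_less)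
  have "w0 \<noteq> 0" using lt by auto
  then consider "w0 > 0" | "w0 < 0" by linarith
  then show ?thesis
  proof cases
    case 1
    then have "e0 * w0 > 0" using E by simp
    then have "mdotR e v > 0" using lt2 unfolding e v by auto
    then show ?thesis using 1 unfolding v by simp
  next
    case 2
    then have "e0 * w0 < 0" using E by (simp add: mult_pos_neg)
    then have "mdotR e v < 0" using lt2 unfolding e v by auto
    then show ?thesis using 2 unfolding v by simp
  qed
qed

lemma cone: fixes y0 y1 y2 :: real assumes "y0^2 - y1^2 - y2^2 > 0" shows "y0 > 0 \<longleftrightarrow> y0 + y1 > 0"
proof -
  have "y1^2 < y0^2" using assms by (smt (verit) zero_le_power2)
  then have "\<bar>y1\<bar> < \<bar>y0\<bar>" by (metis abs_le_square_iff not_less)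
  then show ?thesis by linarith
qed

lemma Vminus_iff: "y \<in> Vminus \<longleftrightarrow> -y \<in> Vplus"
  unfolding Vminus_def by (metis add.inverse_inverse image_iff)

lemma neg_mdotR: "mdotR (-y) (-y) = mdotR y y"
  by (cases y) simp



lemma char:
  assumes lm: "l \<noteq> m" and e: "e \<in> Vplus"
  shows "zmap (l,m) \<in> Xc"
    "zmap (l,m) \<in> Tplus \<longleftrightarrow> Im l < 0 \<and> Im m > 0"
    "zmap (l,m) \<in> Tminus \<longleftrightarrow> Im l > 0 \<and> Im m < 0"
    "zmap (l,m) \<in> Tleft e \<longleftrightarrow> Im l > 0 \<and> Im m > 0"
    "zmap (l,m) \<in> Tright e \<longleftrightarrow> Im l < 0 \<and> Im m < 0"
proof -
  obtain z0 z1 z2 where zz: "zmap (l,m) = (z0,z1,z2)" by (metis prod.exhaust)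
  define z where "z = zmap (l,m)"
  have zz': "z = (z0,z1,z2)" using zz z_def by simp
  define N where "N = (Re l - Re m)^2 + (Im l - Im m)^2"
  define b where "b = Im l"
  define d where "d = Im m"
  define P where "P = b + d + (cmod l)^2 * d + (cmod m)^2 * b"
  have Np: "N > 0" and S: "Im z0 + Im z1 = 2*(d - b)/N"
    and Y0: "(Im z0)^2 - (Im z1)^2 - (Im z2)^2 = -4*b*d/N"
    and M0: "Re z1 * Im z2 - Re z2 * Im z1 = P/N"
    using zmap_im[OF lm zz] unfolding N_def b_def d_def P_def by auto
  have X: "z \<in> Xc" unfolding z_def Xc_def using zmap_X[OF lm] by simp
  then show "zmap (l,m) \<in> Xc" by (simp add: z_def)
  define Y where "Y = mdotR (im3 z) (im3 z)"
  have Y: "Y = -4*b*d/N" unfolding Y_def zz' using Y0 by (simp add: power2_eq_square)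
  have YN: "Y*N = -4*(b*d)" unfolding Y using Np by simp
  have YNp: "Y > 0 \<longleftrightarrow> Y*N > 0" using Np by (simp add: zero_less_mult_iff)
  have YNn: "Y < 0 \<longleftrightarrow> Y*N < 0" using Np by (simp add: mult_less_0_iff)
  have Ypos: "Y > 0 \<longleftrightarrow> b*d < 0" unfolding YNp YN by simp
  have Yneg: "Y < 0 \<longleftrightarrow> b*d > 0" unfolding YNn YN by simp
  define s where "s = Im z0 + Im z1"
  have SN: "s*N = 2*(d-b)" unfolding s_def S using Np by simp
  have SNp: "s > 0 \<longleftrightarrow> s*N > 0" using Np by (simp add: zero_less_mult_iff)
  have SNn: "s < 0 \<longleftrightarrow> s*N < 0" using Np by (simp add: mult_less_0_iff)
  have Spos': "s > 0 \<longleftrightarrow> d > b" unfolding SNp SN by simp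
  have Sneg': "s < 0 \<longleftrightarrow> b > d" unfolding SNn SN by simp
  have Spos: "Im z0 + Im z1 > 0 \<longleftrightarrow> d > b" using Spos' unfolding s_def .
  have Sneg: "-Im z0 + - Im z1 > 0 \<longleftrightarrow> b > d" using Sneg' unfolding s_def by auto
  have Yc: "(Im z0)^2 - (Im z1)^2 - (Im z2)^2 = Y" using Y Y0 by simp
  show "zmap (l,m) \<in> Tplus \<longleftrightarrow> Im l < 0 \<and> Im m > 0"
  proof -
    have "zmap (l,m) \<in> Tplus \<longleftrightarrow> Y > 0 \<and> Im z0 > 0"
      using X unfolding Tplus_def Vplus_def Y_def z_def[symmetric] zz' by auto
    also have "... \<longleftrightarrow> Y > 0 \<and> Im z0 + Im z1 > 0" using cone[of "Im z0" "Im z1" "Im z2"] Yc by auto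
    also have "... \<longleftrightarrow> b < 0 \<and> d > 0" unfolding Ypos Spos by (auto simp: mult_less_0_iff)
    finally show ?thesis unfolding b_def d_def .
  qed
  show "zmap (l,m) \<in> Tminus \<longleftrightarrow> Im l > 0 \<and> Im m < 0"
  proof -
    have "zmap (l,m) \<in> Tminus \<longleftrightarrow> Y > 0 \<and> - Im z0 > 0"
      using X unfolding Tminus_def Vminus_iff Vplus_def Y_def z_def[symmetric] zz' by auto
    also have "... \<longleftrightarrow> Y > 0 \<and> - Im z0 + - Im z1 > 0" using cone[of "- Im z0" "- Im z1" "- Im z2"] Yc by auto
    also have "... \<longleftrightarrow> b > 0 \<and> d < 0" unfolding Ypos Sneg by (auto simp: mult_less_0_iff)
    finally show ?thesis unfolding b_def d_def .
  qed
  have det: "Y < 0 \<Longrightarrow> sgn (det3 e (re3 z) (im3 z)) = sgn P"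
  proof -
    assume "Y < 0"
    have "mdotR (mv (re3 z) (im3 z)) (mv (re3 z) (im3 z)) = (Y - 1) * Y"
      unfolding mv_norm Y_def using Xc_split[OF X zz'] by simp
    also have "... > 0" using \<open>Y < 0\<close> by (simp add: mult_neg_neg)
    finally have "sgn (det3 e (re3 z) (im3 z)) = sgn (fst (mv (re3 z) (im3 z)))"
      unfolding det_mv by (rule sgn_timelike[OF e])
    also have "fst (mv (re3 z) (im3 z)) = P/N" unfolding mv_def zz' using M0 by simp
    also have "sgn (P/N) = sgn P" using Np by simp
    finally show ?thesis .
  qed
  have Ppos: "b > 0 \<Longrightarrow> d > 0 \<Longrightarrow> P > 0"
  proof -
    assume "b > 0" "d > 0"
    moreover have "(cmod l)^2 * d \<ge> 0" "(cmod m)^2 * b \<ge> 0" using calculation by simp_all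
    ultimately show ?thesis unfolding P_def by linarith
  qed
  have Pneg: "b < 0 \<Longrightarrow> d < 0 \<Longrightarrow> P < 0"
  proof -
    assume "b < 0" "d < 0"
    moreover have "(cmod l)^2 * d \<le> 0" "(cmod m)^2 * b \<le> 0" using calculation
      by (simp_all add: mult_nonneg_nonpos)
    ultimately show ?thesis unfolding P_def by linarith
  qed
  have bd: "b*d > 0 \<longleftrightarrow> (b > 0 \<and> d > 0) \<or> (b < 0 \<and> d < 0)" by (auto simp: zero_less_mult_iff)
  have T: "zmap (l,m) \<in> Tleft e \<longleftrightarrow> Y < 0 \<and> sgn (det3 e (re3 z) (im3 z)) = 1"
    "zmap (l,m) \<in> Tright e \<longleftrightarrow> Y < 0 \<and> sgn (det3 e (re3 z) (im3 z)) = -1"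
    using X unfolding Tleft_def Tright_def Y_def z_def[symmetric] by auto
  show "zmap (l,m) \<in> Tleft e \<longleftrightarrow> Im l > 0 \<and> Im m > 0"
    unfolding T b_def[symmetric] d_def[symmetric] using det Yneg bd Ppos Pneg
    by (smt (verit) sgn_neg sgn_pos)
  show "zmap (l,m) \<in> Tright e \<longleftrightarrow> Im l < 0 \<and> Im m < 0"
    unfolding T b_def[symmetric] d_def[symmetric] using det Yneg bd Ppos Pneg
    by (smt (verit) sgn_neg sgn_pos)
qed



lemma holo2_H2: "holo2 f S \<longleftrightarrow> (\<forall>p\<in>S. H2 f p)" unfolding holo2_def H2_def ..
lemma holo3_H3: "holo3 f S \<longleftrightarrow> (\<forall>p\<in>S. H3 f p)" unfolding holo3_def H3_def ..

lemma inv_gen: assumes "\<And>l m. (l,m) \<in> A \<Longrightarrow> l \<noteq> m \<and> l \<noteq> 0 \<and> m \<noteq> 0"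
  shows "inv_formulas A"
  unfolding inv_formulas_def
proof (intro allI impI)
  fix l m assume "(l,m) \<in> A"
  then have h: "l \<noteq> m" "l \<noteq> 0" "m \<noteq> 0" using assms by auto
  obtain z0 z1 z2 where zz: "zmap (l,m) = (z0,z1,z2)" by (metis prod.exhaust)
  show "case zmap (l, m) of (z0, z1, z2) \<Rightarrow>
        l = (z0 - z1) / (z2 - 1) \<and> l = (z2 + 1) / (z0 + z1) \<and>
        m = (z0 - z1) / (z2 + 1) \<and> m = (z2 - 1) / (z0 + z1)"
    unfolding zz using zmap_inv[OF h(1) zz] h by simp
qed

definition G :: "c3 \<Rightarrow> c2" where
  "G z = (case z of (z0,z1,z2) \<Rightarrow> ((z2+1)/(z0+z1), (z2-1)/(z0+z1)))"

lemma G_zmap: "fst p \<noteq> snd p \<Longrightarrow> G (zmap p) = p"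
proof -
  assume h: "fst p \<noteq> snd p"
  obtain l m where p: "p = (l,m)" by (metis prod.exhaust)
  obtain z0 z1 z2 where zz: "zmap (l,m) = (z0,z1,z2)" by (metis prod.exhaust)
  show ?thesis using zmap_inv(1,2)[OF _ zz] h unfolding p G_def zz by simp
qed

lemma open_tau: "open (tau s s')"
proof -
  have "tau s s' = {p. 0 < s * Im (fst p)} \<inter> {p. 0 < s' * Im (snd p)}" by (auto simp: tau_def)
  moreover have "open {p::c2. 0 < s * Im (fst p)}"
    by (intro open_Collect_less continuous_intros)
  moreover have "open {p::c2. 0 < s' * Im (snd p)}"
    by (intro open_Collect_less continuous_intros)
  ultimately show ?thesis by auto
qed

lemma closed_diag: "closed diag"
proof -
  have "diag = {p::c2. fst p = snd p}" by (auto simp: diag_def)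
  moreover have "closed {p::c2. fst p = snd p}" by (intro closed_Collect_eq continuous_intros)
  ultimately show ?thesis by simp
qed

lemma H2_c0: "fst p - snd p \<noteq> 0 \<Longrightarrow> H2 (\<lambda>p. (1 + fst p * snd p) / (fst p - snd p)) p"
  apply (rule H2_divide)
  apply (rule H2_add)
  apply (rule H2_const)
  apply (rule H2_mult)
  apply (rule H2_fst)
  apply (rule H2_snd)
  apply (rule H2_diff)
  apply (rule H2_fst)
  apply (rule H2_snd)
  apply assumption
  done

lemma H2_c1: "fst p - snd p \<noteq> 0 \<Longrightarrow> H2 (\<lambda>p. (1 - fst p * snd p) / (fst p - snd p)) p"
  apply (rule H2_divide)
  apply (rule H2_diff)
  apply (rule H2_const)
  apply (rule H2_mult)
  apply (rule H2_fst)
  apply (rule H2_snd)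
  apply (rule H2_diff)
  apply (rule H2_fst)
  apply (rule H2_snd)
  apply assumption
  done

lemma H2_c2: "fst p - snd p \<noteq> 0 \<Longrightarrow> H2 (\<lambda>p. (fst p + snd p) / (fst p - snd p)) p"
  apply (rule H2_divide)
  apply (rule H2_add)
  apply (rule H2_fst)
  apply (rule H2_snd)
  apply (rule H2_diff)
  apply (rule H2_fst)
  apply (rule H2_snd)
  apply assumption
  done

lemma H3_F1: "fst q + fst (snd q) \<noteq> 0 \<Longrightarrow> H3 (\<lambda>q::c3. (snd (snd q) + 1) / (fst q + fst (snd q))) q"
  apply (rule H3_divide)
  apply (rule H3_add)
  apply (rule H3_2)
  apply (rule H3_const)
  apply (rule H3_add)
  apply (rule H3_0)
  apply (rule H3_1)
  apply assumption
  done

lemma H3_F2: "fst q + fst (snd q) \<noteq> 0 \<Longrightarrow> H3 (\<lambda>q::c3. (snd (snd q) - 1) / (fst q + fst (snd q))) q"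
  apply (rule H3_divide)
  apply (rule H3_diff)
  apply (rule H3_2)
  apply (rule H3_const)
  apply (rule H3_add)
  apply (rule H3_0)
  apply (rule H3_1)
  apply assumption
  done

lemma holo_zmap: assumes "\<And>l m. (l,m) \<in> A \<Longrightarrow> l \<noteq> m" shows "holo_map23 zmap A"
proof -
  have e: "(\<lambda>p. fst (zmap p)) = (\<lambda>p. (1 + fst p * snd p) / (fst p - snd p))"
    "(\<lambda>p. fst (snd (zmap p))) = (\<lambda>p. (1 - fst p * snd p) / (fst p - snd p))"
    "(\<lambda>p. snd (snd (zmap p))) = (\<lambda>p. (fst p + snd p) / (fst p - snd p))"
    by (auto simp: zmap_def split: prod.splits)
  have nz: "p \<in> A \<Longrightarrow> fst p - snd p \<noteq> 0" for p using assms by (cases p) auto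
  show ?thesis unfolding holo_map23_def e holo2_H2
    using nz by (intro conjI ballI H2_c0 H2_c1 H2_c2) auto
qed

lemma biholo_gen:
  assumes openA: "open A" and Ad: "\<And>l m. (l,m) \<in> A \<Longrightarrow> l \<noteq> m"
    and fwd: "\<And>l m. (l,m) \<in> A \<Longrightarrow> zmap (l,m) \<in> B"
    and bwd: "\<And>z. z \<in> B \<Longrightarrow> fst z + fst (snd z) \<noteq> 0 \<and> z \<in> Xc \<and> G z \<in> A"
  shows "biholo zmap A B"
proof -
  have GA: "p \<in> A \<Longrightarrow> G (zmap p) = p" for p using Ad G_zmap by (cases p) auto
  have ZG: "z \<in> B \<Longrightarrow> zmap (G z) = z" for z
  proof -
    assume zB: "z \<in> B"
    obtain z0 z1 z2 where zz: "z = (z0,z1,z2)" by (metis prod.exhaust)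
    show ?thesis using surj_pt(2)[of z z0 z1 z2] bwd[OF zB] unfolding zz G_def by simp
  qed
  have inj: "inj_on zmap A" by (metis GA inj_onI)
  have img: "zmap ` A = B"
  proof
    show "zmap ` A \<subseteq> B" using fwd by auto
    show "B \<subseteq> zmap ` A" using ZG bwd by (metis image_eqI subsetI)
  qed
  have bij: "bij_betw zmap A B" using inj img by (simp add: bij_betw_def)
  have TI: "z \<in> B \<Longrightarrow> the_inv_into A zmap z = G z" for z
    using the_inv_into_f_eq[OF inj ZG] bwd by blast
  define U where "U = {q::c3. fst q + fst (snd q) \<noteq> 0}"
  have openU: "open U" unfolding U_def by (intro open_Collect_neq continuous_intros)
  define F1 where "F1 = (\<lambda>q::c3. (snd (snd q) + 1) / (fst q + fst (snd q)))"
  define F2 where "F2 = (\<lambda>q::c3. (snd (snd q) - 1) / (fst q + fst (snd q)))"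
  have h1: "holo3 F1 U" unfolding holo3_H3 F1_def U_def by (intro ballI H3_F1) simp
  have h2: "holo3 F2 U" unfolding holo3_H3 F2_def U_def by (intro ballI H3_F2) simp
  have GF: "G q = (F1 q, F2 q)" for q unfolding G_def F1_def F2_def by (cases q) auto
  have sub: "holo_sub32 (the_inv_into A zmap) B"
    unfolding holo_sub32_def
  proof
    fix p assume "p \<in> B"
    have pU: "p \<in> U" using bwd \<open>p \<in> B\<close> unfolding U_def by auto
    show "\<exists>U F1 F2. open U \<and> p \<in> U \<and> holo3 F1 U \<and> holo3 F2 U \<and>
      (\<forall>q\<in>U \<inter> B. the_inv_into A zmap q = (F1 q, F2 q))"
      by (rule exI[of _ U], rule exI[of _ F1], rule exI[of _ F2]) (use openU h1 h2 pU TI GF in auto)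
  qed
  show ?thesis unfolding biholo_def using openA holo_zmap[OF Ad] bij sub by simp
qed

lemma G_props: assumes "z \<in> Xc" "mdotR (im3 z) (im3 z) \<noteq> 0"
  shows "fst z + fst (snd z) \<noteq> 0" "fst (G z) \<noteq> snd (G z)" "zmap (G z) = z"
proof -
  obtain z0 z1 z2 where zz: "z = (z0,z1,z2)" by (metis prod.exhaust)
  have s: "z0 + z1 \<noteq> 0" using sum_nz[OF assms(1) zz assms(2)] .
  show "fst z + fst (snd z) \<noteq> 0" using s zz by simp
  show "fst (G z) \<noteq> snd (G z)" "zmap (G z) = z" using surj_pt[OF assms(1) zz s] unfolding zz G_def by simp_all
qed

theorem proposition7:
  fixes e :: r3
  assumes "e \<in> Vplus"
  shows "biholo zmap (tau (-1) 1) Tplus \<and> inv_formulas (tau (-1) 1)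
       \<and> biholo zmap (tau 1 (-1)) Tminus \<and> inv_formulas (tau 1 (-1))
       \<and> biholo zmap (tau 1 1 - diag) (Tleft e) \<and> inv_formulas (tau 1 1 - diag)
       \<and> biholo zmap (tau (-1) (-1) - diag) (Tright e) \<and> inv_formulas (tau (-1) (-1) - diag)"
proof -
  note C = char[OF _ assms]
  have G1: "z \<in> Xc \<Longrightarrow> mdotR (im3 z) (im3 z) \<noteq> 0 \<Longrightarrow>
     fst z + fst (snd z) \<noteq> 0 \<and> z \<in> Xc \<and> fst (G z) \<noteq> snd (G z) \<and> zmap (fst (G z), snd (G z)) = z" for z
    using G_props by simp
  have a1: "biholo zmap (tau (-1) 1) Tplus"
  proof (rule biholo_gen[OF open_tau])
    show "(l,m) \<in> tau (-1) 1 \<Longrightarrow> l \<noteq> m" for l m by (auto simp: tau_def)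
    show "(l,m) \<in> tau (-1) 1 \<Longrightarrow> zmap (l,m) \<in> Tplus" for l m using C(2)[of l m] by (cases "l = m") (auto simp: tau_def)
    fix z assume z: "z \<in> Tplus"
    then have "z \<in> Xc" "mdotR (im3 z) (im3 z) \<noteq> 0" by (auto simp: Tplus_def Vplus_def)
    note g = G1[OF this]
    then show "fst z + fst (snd z) \<noteq> 0 \<and> z \<in> Xc \<and> G z \<in> tau (-1) 1"
      using C(2)[of "fst (G z)" "snd (G z)"] z by (cases "G z") (auto simp: tau_def)
  qed
  have a2: "biholo zmap (tau 1 (-1)) Tminus"
  proof (rule biholo_gen[OF open_tau])
    show "(l,m) \<in> tau 1 (-1) \<Longrightarrow> l \<noteq> m" for l m by (auto simp: tau_def)
    show "(l,m) \<in> tau 1 (-1) \<Longrightarrow> zmap (l,m) \<in> Tminus" for l m using C(3)[of l m] by (cases "l = m") (auto simp: tau_def)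
    fix z assume z: "z \<in> Tminus"
    then have "z \<in> Xc" "- im3 z \<in> Vplus" by (auto simp: Tminus_def Vminus_iff)
    then have "z \<in> Xc" "mdotR (im3 z) (im3 z) \<noteq> 0" using neg_mdotR[of "im3 z"] by (auto simp: Vplus_def)
    note g = G1[OF this]
    then show "fst z + fst (snd z) \<noteq> 0 \<and> z \<in> Xc \<and> G z \<in> tau 1 (-1)"
      using C(3)[of "fst (G z)" "snd (G z)"] z by (cases "G z") (auto simp: tau_def)
  qed
  have a3: "biholo zmap (tau 1 1 - diag) (Tleft e)"
  proof (rule biholo_gen[OF open_Diff[OF open_tau closed_diag]])
    show "(l,m) \<in> tau 1 1 - diag \<Longrightarrow> l \<noteq> m" for l m by (auto simp: diag_def)
    show "(l,m) \<in> tau 1 1 - diag \<Longrightarrow> zmap (l,m) \<in> Tleft e" for l m using C(4)[of l m] by (auto simp: tau_def diag_def)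
    fix z assume z: "z \<in> Tleft e"
    then have "z \<in> Xc" "mdotR (im3 z) (im3 z) \<noteq> 0" by (auto simp: Tleft_def)
    note g = G1[OF this]
    then show "fst z + fst (snd z) \<noteq> 0 \<and> z \<in> Xc \<and> G z \<in> tau 1 1 - diag"
      using C(4)[of "fst (G z)" "snd (G z)"] z by (cases "G z") (auto simp: tau_def diag_def)
  qed
  have a4: "biholo zmap (tau (-1) (-1) - diag) (Tright e)"
  proof (rule biholo_gen[OF open_Diff[OF open_tau closed_diag]])
    show "(l,m) \<in> tau (-1) (-1) - diag \<Longrightarrow> l \<noteq> m" for l m by (auto simp: diag_def)
    show "(l,m) \<in> tau (-1) (-1) - diag \<Longrightarrow> zmap (l,m) \<in> Tright e" for l m using C(5)[of l m] by (auto simp: tau_def diag_def)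
    fix z assume z: "z \<in> Tright e"
    then have "z \<in> Xc" "mdotR (im3 z) (im3 z) \<noteq> 0" by (auto simp: Tright_def)
    note g = G1[OF this]
    then show "fst z + fst (snd z) \<noteq> 0 \<and> z \<in> Xc \<and> G z \<in> tau (-1) (-1) - diag"
      using C(5)[of "fst (G z)" "snd (G z)"] z by (cases "G z") (auto simp: tau_def diag_def)
  qed
  have i1: "inv_formulas (tau (-1) 1)" by (rule inv_gen) (auto simp: tau_def)
  have i2: "inv_formulas (tau 1 (-1))" by (rule inv_gen) (auto simp: tau_def)
  have i3: "inv_formulas (tau 1 1 - diag)" by (rule inv_gen) (auto simp: tau_def diag_def)
  have i4: "inv_formulas (tau (-1) (-1) - diag)" by (rule inv_gen) (auto simp: tau_def diag_def)
  show ?thesis using a1 a2 a3 a4 i1 i2 i3 i4 by blast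
qed

end
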